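(* Let $\mathcal{C},\mathcal{D}$ be generalized categories and $F:\mathcal{C}\to\mathcal{D}$, $G:\mathcal{D}\to\mathcal{C}$ functors. The following are equivalent: (1) there are natural transformations $\eta:\mathrm{id}_{\mathcal{C}}\Rightarrow G\circ F$ and $\varepsilon:F\circ G\Rightarrow \mathrm{id}_{\mathcal{D}}$ such that $(F,G,\eta,\varepsilon)$ is an adjunction, i.e. $G(\varepsilon(y))\cdot\eta(G(y)) = 1_{G(y)}$ for all $y\in\mathcal{D}$ and $\varepsilon(F(x))\cdot F(\eta(x)) = 1_{F(x)}$ for all $x\in\mathcal{C}$; (2) for every $f\in\mathcal{C}$ and $g\in\mathcal{D}$ there is a bijection $\phi_{f,g}:\hom(F(f),g)\to\hom(f,G(g))$ which is natural in $f$ and $g$, meaning: for all $f,f'\in\mathcal{C}$, $g\in\mathcal{D}$, $v\in\hom(f,f')$, $u\in\hom(F(f'),g)$ with $u\cdot F(v)$ defined, $\phi_{f,g}(u\cdot F(v))=\phi_{f',g}(u)\cdot v$; and for all $f\in\mathcal{C}$, $g,g'\in\mathcal{D}$, $v\in\hom(F(f),g)$, $v'\in\hom(g,g')$ with $v'\cdot v$ defined, $\phi_{f,g'}(v'\cdot v)=G(v')\cdot\phi_{f,g}(v)$.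
   Context: A generalized category is a tuple $(\mathcal{C},\le,s,t,\cdot)$ where $\mathcal{C}$ is a set, $\le$ a relation on $\mathcal{C}$, $s,t:\mathcal{C}\to\mathcal{C}$ maps (write $\bar a = s(a)$, $\hat a = t(a)$), and $\cdot$ a partially defined binary operation (write $ab$), such that: (1) $\le$ is a partial order; (2) $ab$ is defined iff $s(a)\le t(b)$; (3) if $(ab)c$ or $a(bc)$ is defined then $(ab)c=a(bc)$; (4) if $ab$ is defined then $s(ab)=s(b)$ and $t(ab)=t(a)$; (5) for every $a$ there is $b$ with $s(b)=t(b)=a$ such that $bc=c$ whenever $bc$ is defined and $cb=c$ whenever $cb$ is defined; this $b$ is unique, denoted $1_a$; (6) if $s(a)=t(a)=a$ then $ba=b$ whenever $ba$ is defined and $ab=b$ whenever $ab$ is defined; (7) if $a\le b$ then $s(a)\le s(b)$, $t(a)\le t(b)$ and $1_a\le 1_b$; and if $a\le b$, $c\le d$ and $ac,bd$ are defined then $ac\le bd$. $\hom(a,b)=\{c\in\mathcal{C}:\bar c=a,\hat c=b\}$. A functor $F:\mathcal{C}\to\mathcal{D}$ is a map with $a\le b\Rightarrow F(a)\le F(b)$, $F(\bar a)=\overline{F(a)}$, $F(\hat a)=\widehat{F(a)}$, $F(ab)=F(a)F(b)$ whenever $ab$ is defined, and $F(1_a)=1_{F(a)}$. For functors $F,G:\mathcal{C}\to\mathcal{D}$, a natural transformation $F\Rightarrow G$ is a pair $(\theta_1,\theta_2)$ of maps $\mathcal{C}\to\mathcal{D}$ such that for all $a$, $\theta_1(a)F(a)$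 and $G(a)\theta_2(a)$ are defined and equal, $\theta_1(a)=\theta_1(b)$ whenever $\hat a=\hat b$, and $\theta_2(a)=\theta_2(b)$ whenever $\bar a=\bar b$; it is identified with the map $\theta(x):=\theta_1(1_x)$ ($=\theta_2(1_x)$), which satisfies $\theta(\hat f)\cdot F(f)=G(f)\cdot\theta(\bar f)$. *)

theory Defs
  imports Main
begin

text \<open>A generalized category: carrier, order, source, target and a composition that is
  only meaningful when defined (i.e. when src a \<le> tgt b).\<close>

record 'a gcat =
  gc_carrier :: "'a set"
  gc_le :: "'a \<Rightarrow> 'a \<Rightarrow> bool"
  gc_src :: "'a \<Rightarrow> 'a"
  gc_tgt :: "'a \<Rightarrow> 'a"
  gc_comp :: "'a \<Rightarrow> 'a \<Rightarrow> 'a"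

definition gc_defd :: "'a gcat \<Rightarrow> 'a \<Rightarrow> 'a \<Rightarrow> bool" where
  "gc_defd C a b \<longleftrightarrow> gc_le C (gc_src C a) (gc_tgt C b)"

definition gc_is_unit :: "'a gcat \<Rightarrow> 'a \<Rightarrow> 'a \<Rightarrow> bool" where
  "gc_is_unit C a b \<longleftrightarrow> b \<in> gc_carrier C \<and> gc_src C b = a \<and> gc_tgt C b = a \<and>
     (\<forall>c\<in>gc_carrier C. gc_defd C b c \<longrightarrow> gc_comp C b c = c) \<and>
     (\<forall>c\<in>gc_carrier C. gc_defd C c b \<longrightarrow> gc_comp C c b = c)"

text \<open>The identity 1_a (unique when it exists, by axiom (5) and reflexivity).\<close>
definition gc_ident :: "'a gcat \<Rightarrow> 'a \<Rightarrow> 'a" where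
  "gc_ident C a = (SOME b. gc_is_unit C a b)"

definition gc_hom :: "'a gcat \<Rightarrow> 'a \<Rightarrow> 'a \<Rightarrow> 'a set" where
  "gc_hom C a b = {c \<in> gc_carrier C. gc_src C c = a \<and> gc_tgt C c = b}"

definition gen_cat :: "'a gcat \<Rightarrow> bool" where
  "gen_cat C \<longleftrightarrow>
    \<comment> \<open>closure of the carrier\<close>
    (\<forall>a\<in>gc_carrier C. gc_src C a \<in> gc_carrier C \<and> gc_tgt C a \<in> gc_carrier C) \<and>
    (\<forall>a\<in>gc_carrier C. \<forall>b\<in>gc_carrier C. gc_defd C a b \<longrightarrow> gc_comp C a b \<in> gc_carrier C) \<and>
    \<comment> \<open>(1) partial order on the carrier\<close>
    (\<forall>a b. gc_le C a b \<longrightarrow> a \<in> gc_carrier C \<and> b \<in> gc_carrier C) \<and>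
    (\<forall>a\<in>gc_carrier C. gc_le C a a) \<and>
    (\<forall>a\<in>gc_carrier C. \<forall>b\<in>gc_carrier C. gc_le C a b \<and> gc_le C b a \<longrightarrow> a = b) \<and>
    (\<forall>a\<in>gc_carrier C. \<forall>b\<in>gc_carrier C. \<forall>c\<in>gc_carrier C.
        gc_le C a b \<and> gc_le C b c \<longrightarrow> gc_le C a c) \<and>
    \<comment> \<open>(3) associativity: if either side is defined, both are and they agree\<close>
    (\<forall>a\<in>gc_carrier C. \<forall>b\<in>gc_carrier C. \<forall>c\<in>gc_carrier C.
        ((gc_defd C a b \<and> gc_defd C (gc_comp C a b) c) \<or>
         (gc_defd C b c \<and> gc_defd C a (gc_comp C b c))) \<longrightarrow>
        gc_defd C a b \<and> gc_defd C (gc_comp C a b) c \<and>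
        gc_defd C b c \<and> gc_defd C a (gc_comp C b c) \<and>
        gc_comp C (gc_comp C a b) c = gc_comp C a (gc_comp C b c)) \<and>
    \<comment> \<open>(4)\<close>
    (\<forall>a\<in>gc_carrier C. \<forall>b\<in>gc_carrier C. gc_defd C a b \<longrightarrow>
        gc_src C (gc_comp C a b) = gc_src C b \<and> gc_tgt C (gc_comp C a b) = gc_tgt C a) \<and>
    \<comment> \<open>(5)\<close>
    (\<forall>a\<in>gc_carrier C. \<exists>b. gc_is_unit C a b) \<and>
    \<comment> \<open>(6)\<close>
    (\<forall>a\<in>gc_carrier C. gc_src C a = a \<and> gc_tgt C a = a \<longrightarrow>
        (\<forall>b\<in>gc_carrier C. gc_defd C b a \<longrightarrow> gc_comp C b a = b) \<and>
        (\<forall>b\<in>gc_carrier C. gc_defd C a b \<longrightarrow> gc_comp C a b = b)) \<and>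
    \<comment> \<open>(7)\<close>
    (\<forall>a\<in>gc_carrier C. \<forall>b\<in>gc_carrier C. gc_le C a b \<longrightarrow>
        gc_le C (gc_src C a) (gc_src C b) \<and> gc_le C (gc_tgt C a) (gc_tgt C b) \<and>
        gc_le C (gc_ident C a) (gc_ident C b)) \<and>
    (\<forall>a\<in>gc_carrier C. \<forall>b\<in>gc_carrier C. \<forall>c\<in>gc_carrier C. \<forall>d\<in>gc_carrier C.
        gc_le C a b \<and> gc_le C c d \<and> gc_defd C a c \<and> gc_defd C b d \<longrightarrow>
        gc_le C (gc_comp C a c) (gc_comp C b d))"

definition gc_functor :: "'a gcat \<Rightarrow> 'b gcat \<Rightarrow> ('a \<Rightarrow> 'b) \<Rightarrow> bool" where
  "gc_functor C D F \<longleftrightarrow>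
    (\<forall>a\<in>gc_carrier C. F a \<in> gc_carrier D) \<and>
    (\<forall>a\<in>gc_carrier C. \<forall>b\<in>gc_carrier C. gc_le C a b \<longrightarrow> gc_le D (F a) (F b)) \<and>
    (\<forall>a\<in>gc_carrier C. F (gc_src C a) = gc_src D (F a) \<and> F (gc_tgt C a) = gc_tgt D (F a)) \<and>
    (\<forall>a\<in>gc_carrier C. \<forall>b\<in>gc_carrier C. gc_defd C a b \<longrightarrow>
        F (gc_comp C a b) = gc_comp D (F a) (F b)) \<and>
    (\<forall>a\<in>gc_carrier C. F (gc_ident C a) = gc_ident D (F a))"

definition gc_nat_trans :: "'a gcat \<Rightarrow> 'b gcat \<Rightarrow> ('a \<Rightarrow> 'b) \<Rightarrow> ('a \<Rightarrow> 'b)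
    \<Rightarrow> ('a \<Rightarrow> 'b) \<Rightarrow> ('a \<Rightarrow> 'b) \<Rightarrow> bool" where
  "gc_nat_trans C D F G \<theta>1 \<theta>2 \<longleftrightarrow>
    (\<forall>a\<in>gc_carrier C. \<theta>1 a \<in> gc_carrier D \<and> \<theta>2 a \<in> gc_carrier D \<and>
        gc_defd D (\<theta>1 a) (F a) \<and> gc_defd D (G a) (\<theta>2 a) \<and>
        gc_comp D (\<theta>1 a) (F a) = gc_comp D (G a) (\<theta>2 a)) \<and>
    (\<forall>a\<in>gc_carrier C. \<forall>b\<in>gc_carrier C. gc_tgt C a = gc_tgt C b \<longrightarrow> \<theta>1 a = \<theta>1 b) \<and>
    (\<forall>a\<in>gc_carrier C. \<forall>b\<in>gc_carrier C. gc_src C a = gc_src C b \<longrightarrow> \<theta>2 a = \<theta>2 b)"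

definition gc_nt_val :: "'a gcat \<Rightarrow> ('a \<Rightarrow> 'b) \<Rightarrow> 'a \<Rightarrow> 'b" where
  "gc_nt_val C \<theta>1 x = \<theta>1 (gc_ident C x)"

end

theory Submission imports Defs begin

lemma gen_catD:
  assumes "gen_cat C"
  shows gcD1: "\<forall>a\<in>gc_carrier C. gc_src C a \<in> gc_carrier C \<and> gc_tgt C a \<in> gc_carrier C"
    and gcD2: "\<forall>a\<in>gc_carrier C. \<forall>b\<in>gc_carrier C. gc_defd C a b \<longrightarrow> gc_comp C a b \<in> gc_carrier C"
    and gcD3: "\<forall>a\<in>gc_carrier C. gc_le C a a"
    and gcD4: "\<forall>a\<in>gc_carrier C. \<forall>b\<in>gc_carrier C. \<forall>c\<in>gc_carrier C.
        ((gc_defd C a b \<and> gc_defd C (gc_comp C a b) c) \<or>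
         (gc_defd C b c \<and> gc_defd C a (gc_comp C b c))) \<longrightarrow>
        gc_defd C a b \<and> gc_defd C (gc_comp C a b) c \<and>
        gc_defd C b c \<and> gc_defd C a (gc_comp C b c) \<and>
        gc_comp C (gc_comp C a b) c = gc_comp C a (gc_comp C b c)"
    and gcD5: "\<forall>a\<in>gc_carrier C. \<forall>b\<in>gc_carrier C. gc_defd C a b \<longrightarrow>
        gc_src C (gc_comp C a b) = gc_src C b \<and> gc_tgt C (gc_comp C a b) = gc_tgt C a"
    and gcD6: "\<forall>a\<in>gc_carrier C. \<exists>b. gc_is_unit C a b"
  using assms unfolding gen_cat_def apply -
  subgoal by (elim conjE) assumption
  subgoal by (elim conjE) assumption
  subgoal by (elim conjE) assumption
  subgoal by (elim conjE) assumption
  subgoal by (elim conjE) assumption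
  subgoal by (elim conjE) assumption
  done

lemma gcA:
  assumes "gen_cat C"
  shows gc_src_in: "a \<in> gc_carrier C \<Longrightarrow> gc_src C a \<in> gc_carrier C"
    and gc_tgt_in: "a \<in> gc_carrier C \<Longrightarrow> gc_tgt C a \<in> gc_carrier C"
    and gc_refl: "a \<in> gc_carrier C \<Longrightarrow> gc_le C a a"
  using gcD1[OF assms] gcD3[OF assms] by blast+

lemma gc_defd_eq:
  assumes "gen_cat C" "a \<in> gc_carrier C" "gc_src C a = gc_tgt C b"
  shows "gc_defd C a b"
  using gcA(3)[OF assms(1) gcA(1)[OF assms(1) assms(2)]] assms(3) unfolding gc_defd_def by simp

lemma gc_comp_props:
  assumes "gen_cat C" "a \<in> gc_carrier C" "b \<in> gc_carrier C" "gc_defd C a b"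
  shows "gc_comp C a b \<in> gc_carrier C" "gc_src C (gc_comp C a b) = gc_src C b"
    "gc_tgt C (gc_comp C a b) = gc_tgt C a"
  using gcD2[OF assms(1)] gcD5[OF assms(1)] assms(2-4) by blast+

lemma gc_hom_comp:
  assumes "gen_cat C" "a \<in> gc_hom C y z" "b \<in> gc_hom C x y"
  shows "gc_comp C a b \<in> gc_hom C x z" "gc_defd C a b"
proof -
  have d: "gc_defd C a b" using gc_defd_eq[OF assms(1), of a b] assms unfolding gc_hom_def by auto
  then show "gc_defd C a b" .
  show "gc_comp C a b \<in> gc_hom C x z" using gc_comp_props[OF assms(1) _ _ d] assms
    unfolding gc_hom_def by auto
qed

lemma gc_assoc:
  assumes "gen_cat C" "a \<in> gc_carrier C" "b \<in> gc_carrier C" "c \<in> gc_carrier C"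
    "gc_defd C a b" "gc_defd C b c"
  shows "gc_comp C (gc_comp C a b) c = gc_comp C a (gc_comp C b c)"
proof -
  have "gc_defd C (gc_comp C a b) c"
    using gc_comp_props[OF assms(1,2,3,5)] assms(6) unfolding gc_defd_def by simp
  then have "gc_defd C a b \<and> gc_defd C (gc_comp C a b) c" using assms(5) by simp
  then show ?thesis using gcD4[OF assms(1), rule_format, OF assms(2,3,4)] by simp
qed

lemma gc_unit:
  assumes "gen_cat C" "a \<in> gc_carrier C"
  shows "gc_is_unit C a (gc_ident C a)"
proof -
  have "\<exists>b. gc_is_unit C a b" using gcD6[OF assms(1)] assms(2) by blast
  then show ?thesis unfolding gc_ident_def by (rule someI_ex)
qed

lemma gc_hom_carrier: "c \<in> gc_hom C x y \<Longrightarrow> c \<in> gc_carrier C"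
  and gc_hom_src: "c \<in> gc_hom C x y \<Longrightarrow> gc_src C c = x"
  and gc_hom_tgt: "c \<in> gc_hom C x y \<Longrightarrow> gc_tgt C c = y"
  unfolding gc_hom_def by simp_all

lemma gc_in_hom: "c \<in> gc_carrier C \<Longrightarrow> c \<in> gc_hom C (gc_src C c) (gc_tgt C c)"
  unfolding gc_hom_def by simp

lemma unit_parts:
  assumes "gc_is_unit C a b"
  shows "b \<in> gc_carrier C" "gc_src C b = a" "gc_tgt C b = a"
    "\<And>c. c \<in> gc_carrier C \<Longrightarrow> gc_defd C b c \<Longrightarrow> gc_comp C b c = c"
    "\<And>c. c \<in> gc_carrier C \<Longrightarrow> gc_defd C c b \<Longrightarrow> gc_comp C c b = c"
  using assms unfolding gc_is_unit_def by blast+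

lemma gc_ident_props:
  assumes "gen_cat C" "a \<in> gc_carrier C"
  shows "gc_ident C a \<in> gc_carrier C" "gc_src C (gc_ident C a) = a"
    "gc_tgt C (gc_ident C a) = a" "gc_ident C a \<in> gc_hom C a a"
proof -
  note u = unit_parts[OF gc_unit[OF assms]]
  show "gc_ident C a \<in> gc_carrier C" "gc_src C (gc_ident C a) = a" "gc_tgt C (gc_ident C a) = a"
    using u(1-3) .
  show "gc_ident C a \<in> gc_hom C a a" unfolding gc_hom_def using u(1-3) by simp
qed

lemma gc_ident_left:
  assumes "gen_cat C" "c \<in> gc_carrier C"
  shows "gc_comp C (gc_ident C (gc_tgt C c)) c = c"
proof -
  have t: "gc_tgt C c \<in> gc_carrier C" using gc_tgt_in[OF assms] .
  have "gc_defd C (gc_ident C (gc_tgt C c)) c"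
    using gc_defd_eq[OF assms(1) gc_ident_props(1)[OF assms(1) t]] gc_ident_props(2)[OF assms(1) t] by simp
  then show ?thesis using unit_parts(4)[OF gc_unit[OF assms(1) t] assms(2)] by simp
qed

lemma gc_ident_right:
  assumes "gen_cat C" "c \<in> gc_carrier C"
  shows "gc_comp C c (gc_ident C (gc_src C c)) = c"
proof -
  have t: "gc_src C c \<in> gc_carrier C" using gc_src_in[OF assms] .
  have "gc_defd C c (gc_ident C (gc_src C c))"
    using gc_defd_eq[OF assms(1,2)] gc_ident_props(3)[OF assms(1) t] by simp
  then show ?thesis using unit_parts(5)[OF gc_unit[OF assms(1) t] assms(2)] by simp
qed

lemma gc_hom_left: "gen_cat C \<Longrightarrow> c \<in> gc_hom C x y \<Longrightarrow> gc_comp C (gc_ident C y) c = c"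
  using gc_ident_left[of C c] gc_hom_carrier[of c C x y] gc_hom_tgt[of c C x y] by simp
lemma gc_hom_right: "gen_cat C \<Longrightarrow> c \<in> gc_hom C x y \<Longrightarrow> gc_comp C c (gc_ident C x) = c"
  using gc_ident_right[of C c] gc_hom_carrier[of c C x y] gc_hom_src[of c C x y] by simp

lemma gc_assoc_hom:
  assumes "gen_cat C" "a \<in> gc_hom C z w" "b \<in> gc_hom C y z" "c \<in> gc_hom C x y"
  shows "gc_comp C (gc_comp C a b) c = gc_comp C a (gc_comp C b c)"
  using gc_assoc[OF assms(1) gc_hom_carrier[OF assms(2)] gc_hom_carrier[OF assms(3)]
    gc_hom_carrier[OF assms(4)] gc_hom_comp(2)[OF assms(1,2,3)] gc_hom_comp(2)[OF assms(1,3,4)]] .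

lemma fun_props:
  assumes "gc_functor C D F"
  shows fun_in: "a \<in> gc_carrier C \<Longrightarrow> F a \<in> gc_carrier D"
    and fun_src: "a \<in> gc_carrier C \<Longrightarrow> F (gc_src C a) = gc_src D (F a)"
    and fun_tgt: "a \<in> gc_carrier C \<Longrightarrow> F (gc_tgt C a) = gc_tgt D (F a)"
    and fun_comp: "a \<in> gc_carrier C \<Longrightarrow> b \<in> gc_carrier C \<Longrightarrow> gc_defd C a b \<Longrightarrow>
        F (gc_comp C a b) = gc_comp D (F a) (F b)"
    and fun_ident: "a \<in> gc_carrier C \<Longrightarrow> F (gc_ident C a) = gc_ident D (F a)"
  using assms unfolding gc_functor_def by blast+

lemma fun_hom:
  assumes "gen_cat C" "gc_functor C D F" "c \<in> gc_hom C x y"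
  shows "F c \<in> gc_hom D (F x) (F y)"
  using assms fun_props[OF assms(2)] unfolding gc_hom_def by auto

lemma fun_comp_hom:
  assumes "gen_cat C" "gc_functor C D F" "a \<in> gc_hom C y z" "b \<in> gc_hom C x y"
  shows "F (gc_comp C a b) = gc_comp D (F a) (F b)"
  using fun_comp[OF assms(2) gc_hom_carrier[OF assms(3)] gc_hom_carrier[OF assms(4)]
    gc_hom_comp(2)[OF assms(1,3,4)]] .

lemma id_functor: "gen_cat C \<Longrightarrow> gc_functor C C id"
  unfolding gc_functor_def by simp

lemma fun_defd:
  assumes C: "gen_cat C" and F: "gc_functor C D F" and a: "a \<in> gc_carrier C" and b: "b \<in> gc_carrier C"
    and d: "gc_defd C a b"
  shows "gc_defd D (F a) (F b)"
proof -
  have "gc_le C (gc_src C a) (gc_tgt C b)" using d unfolding gc_defd_def .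
  then have "gc_le D (F (gc_src C a)) (F (gc_tgt C b))"
    using F gcA(1)[OF C a] gcA(2)[OF C b] unfolding gc_functor_def by blast
  then show ?thesis unfolding gc_defd_def using fun_src[OF F a] fun_tgt[OF F b] by simp
qed

lemma comp_functor:
  assumes C: "gen_cat C" and F: "gc_functor C D F" and G: "gc_functor D E G"
  shows "gc_functor C E (G \<circ> F)"
  unfolding gc_functor_def
proof (intro conjI ballI impI)
  fix a assume a: "a \<in> gc_carrier C"
  show "(G \<circ> F) a \<in> gc_carrier E" using fun_in[OF G fun_in[OF F a]] by simp
  show "(G \<circ> F) (gc_src C a) = gc_src E ((G \<circ> F) a)" using fun_src[OF G fun_in[OF F a]] fun_src[OF F a] by simp
  show "(G \<circ> F) (gc_tgt C a) = gc_tgt E ((G \<circ> F) a)" using fun_tgt[OF G fun_in[OF F a]] fun_tgt[OF F a] by simp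
  show "(G \<circ> F) (gc_ident C a) = gc_ident E ((G \<circ> F) a)" using fun_ident[OF G fun_in[OF F a]] fun_ident[OF F a] by simp
next
  fix a b assume a: "a \<in> gc_carrier C" and b: "b \<in> gc_carrier C"
  {
    assume "gc_le C a b"
    then have "gc_le D (F a) (F b)" using F a b unfolding gc_functor_def by blast
    then show "gc_le E ((G \<circ> F) a) ((G \<circ> F) b)" using G fun_in[OF F a] fun_in[OF F b]
      unfolding gc_functor_def by simp
  }
  {
    assume d: "gc_defd C a b"
    have "gc_defd D (F a) (F b)" using fun_defd[OF C F a b d] .
    then show "(G \<circ> F) (gc_comp C a b) = gc_comp E ((G \<circ> F) a) ((G \<circ> F) b)"
      using fun_comp[OF F a b d] fun_comp[OF G fun_in[OF F a] fun_in[OF F b]] by simp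
  }
qed

lemma nat_props:
  assumes C: "gen_cat C" and D: "gen_cat D" and F: "gc_functor C D F" and G: "gc_functor C D G"
    and N: "gc_nat_trans C D F G t1 t2"
  shows nat_hom: "x \<in> gc_carrier C \<Longrightarrow> gc_nt_val C t1 x \<in> gc_hom D (F x) (G x)"
    and nat_eq: "a \<in> gc_carrier C \<Longrightarrow>
       gc_comp D (gc_nt_val C t1 (gc_tgt C a)) (F a) = gc_comp D (G a) (gc_nt_val C t1 (gc_src C a))"
proof -
  have N1: "\<And>a. a \<in> gc_carrier C \<Longrightarrow> t1 a \<in> gc_carrier D \<and> t2 a \<in> gc_carrier D \<and>
        gc_defd D (t1 a) (F a) \<and> gc_defd D (G a) (t2 a) \<and>
        gc_comp D (t1 a) (F a) = gc_comp D (G a) (t2 a)"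
    and N2: "\<And>a b. a \<in> gc_carrier C \<Longrightarrow> b\<in>gc_carrier C \<Longrightarrow> gc_tgt C a = gc_tgt C b \<Longrightarrow> t1 a = t1 b"
    and N3: "\<And>a b. a \<in> gc_carrier C \<Longrightarrow> b\<in>gc_carrier C \<Longrightarrow> gc_src C a = gc_src C b \<Longrightarrow> t2 a = t2 b"
    using N unfolding gc_nat_trans_def by blast+
  have eq12: "t1 (gc_ident C x) = t2 (gc_ident C x)" if x: "x \<in> gc_carrier C" for x
  proof -
    let ?i = "gc_ident C x"
    have i: "?i \<in> gc_carrier C" "gc_src C ?i = x" "gc_tgt C ?i = x" using gc_ident_props[OF C x] by auto
    have Fi: "F ?i = gc_ident D (F x)" "G ?i = gc_ident D (G x)" using fun_ident[OF F x] fun_ident[OF G x] by auto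
    have Fx: "F x \<in> gc_carrier D" "G x \<in> gc_carrier D" using fun_in[OF F x] fun_in[OF G x] by auto
    have "gc_comp D (t1 ?i) (F ?i) = t1 ?i"
      using N1[OF i(1)] gc_unit[OF D Fx(1)] Fi unfolding gc_is_unit_def by auto
    moreover have "gc_comp D (G ?i) (t2 ?i) = t2 ?i"
      using N1[OF i(1)] gc_unit[OF D Fx(2)] Fi unfolding gc_is_unit_def by auto
    ultimately show ?thesis using N1[OF i(1)] by simp
  qed
  have srcs: "gc_src D (t2 (gc_ident C (gc_src C a))) = F (gc_src C a)"
    and tgts: "gc_tgt D (t1 (gc_ident C (gc_tgt C a))) = G (gc_tgt C a)"
    and nat1: "gc_comp D (t1 (gc_ident C (gc_tgt C a))) (F a) = gc_comp D (G a) (t2 (gc_ident C (gc_src C a)))"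
    if a: "a \<in> gc_carrier C" for a
  proof -
    have s: "gc_src C a \<in> gc_carrier C" "gc_tgt C a \<in> gc_carrier C" using gcA[OF C] a by auto
    have e1: "t1 a = t1 (gc_ident C (gc_tgt C a))"
      using N2[OF a] gc_ident_props[OF C s(2)] by auto
    have e2: "t2 a = t2 (gc_ident C (gc_src C a))"
      using N3[OF a] gc_ident_props[OF C s(1)] by auto
    have A: "t1 a \<in> gc_carrier D" "t2 a \<in> gc_carrier D" "gc_defd D (t1 a) (F a)" "gc_defd D (G a) (t2 a)"
         "gc_comp D (t1 a) (F a) = gc_comp D (G a) (t2 a)" using N1[OF a] by auto
    have Fa: "F a \<in> gc_carrier D" "G a \<in> gc_carrier D" using fun_in[OF F a] fun_in[OF G a] by auto
    have "gc_src D (gc_comp D (t1 a) (F a)) = gc_src D (F a)" using gc_comp_props[OF D A(1) Fa(1) A(3)] by simp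
    moreover have "gc_src D (gc_comp D (G a) (t2 a)) = gc_src D (t2 a)" using gc_comp_props[OF D Fa(2) A(2) A(4)] by simp
    ultimately show "gc_src D (t2 (gc_ident C (gc_src C a))) = F (gc_src C a)"
      using A(5) e2 fun_src[OF F a] by simp
    have "gc_tgt D (gc_comp D (t1 a) (F a)) = gc_tgt D (t1 a)" using gc_comp_props[OF D A(1) Fa(1) A(3)] by simp
    moreover have "gc_tgt D (gc_comp D (G a) (t2 a)) = gc_tgt D (G a)" using gc_comp_props[OF D Fa(2) A(2) A(4)] by simp
    ultimately show "gc_tgt D (t1 (gc_ident C (gc_tgt C a))) = G (gc_tgt C a)"
      using A(5) e1 fun_tgt[OF G a] by simp
    show "gc_comp D (t1 (gc_ident C (gc_tgt C a))) (F a) = gc_comp D (G a) (t2 (gc_ident C (gc_src C a)))"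
      using A(5) e1 e2 by simp
  qed
  show "x \<in> gc_carrier C \<Longrightarrow> gc_nt_val C t1 x \<in> gc_hom D (F x) (G x)"
  proof -
    assume x: "x \<in> gc_carrier C"
    have i: "gc_ident C x \<in> gc_carrier C" "gc_src C (gc_ident C x) = x" "gc_tgt C (gc_ident C x) = x"
      using gc_ident_props[OF C x] by auto
    show ?thesis using srcs[OF i(1)] tgts[OF i(1)] i eq12[OF x] N1[OF i(1)]
      unfolding gc_nt_val_def gc_hom_def by auto
  qed
  show "a \<in> gc_carrier C \<Longrightarrow>
       gc_comp D (gc_nt_val C t1 (gc_tgt C a)) (F a) = gc_comp D (G a) (gc_nt_val C t1 (gc_src C a))"
  proof -
    assume a: "a \<in> gc_carrier C"
    have "t1 (gc_ident C (gc_src C a)) = t2 (gc_ident C (gc_src C a))" using eq12 gcA(1)[OF C a] .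
    then show ?thesis using nat1[OF a] unfolding gc_nt_val_def by simp
  qed
qed


lemma dir1:
  fixes C :: "'a gcat" and D :: "'b gcat" and F :: "'a \<Rightarrow> 'b" and G :: "'b \<Rightarrow> 'a"
  assumes C: "gen_cat C" and D: "gen_cat D"
    and F: "gc_functor C D F" and G: "gc_functor D C G"
    and N1: "gc_nat_trans C C id (G \<circ> F) \<eta>1 \<eta>2"
    and N2: "gc_nat_trans D D (F \<circ> G) id \<epsilon>1 \<epsilon>2"
    and T1: "\<forall>y\<in>gc_carrier D.
               gc_defd C (G (gc_nt_val D \<epsilon>1 y)) (gc_nt_val C \<eta>1 (G y)) \<and>
               gc_comp C (G (gc_nt_val D \<epsilon>1 y)) (gc_nt_val C \<eta>1 (G y)) = gc_ident C (G y)"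
    and T2: "\<forall>x\<in>gc_carrier C.
               gc_defd D (gc_nt_val D \<epsilon>1 (F x)) (F (gc_nt_val C \<eta>1 x)) \<and>
               gc_comp D (gc_nt_val D \<epsilon>1 (F x)) (F (gc_nt_val C \<eta>1 x)) = gc_ident D (F x)"
  shows "\<exists>\<phi> :: 'a \<Rightarrow> 'b \<Rightarrow> 'b \<Rightarrow> 'a.
            (\<forall>f\<in>gc_carrier C. \<forall>g\<in>gc_carrier D.
               bij_betw (\<phi> f g) (gc_hom D (F f) g) (gc_hom C f (G g))) \<and>
            (\<forall>f\<in>gc_carrier C. \<forall>f'\<in>gc_carrier C. \<forall>g\<in>gc_carrier D.
               \<forall>v\<in>gc_hom C f f'. \<forall>u\<in>gc_hom D (F f') g.
                 gc_defd D u (F v) \<longrightarrow>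
                 \<phi> f g (gc_comp D u (F v)) = gc_comp C (\<phi> f' g u) v) \<and>
            (\<forall>f\<in>gc_carrier C. \<forall>g\<in>gc_carrier D. \<forall>g'\<in>gc_carrier D.
               \<forall>v\<in>gc_hom D (F f) g. \<forall>v'\<in>gc_hom D g g'.
                 gc_defd D v' v \<longrightarrow>
                 \<phi> f g' (gc_comp D v' v) = gc_comp C (G v') (\<phi> f g v))"
proof -
  define \<eta> where "\<eta> = gc_nt_val C \<eta>1"
  define \<epsilon> where "\<epsilon> = gc_nt_val D \<epsilon>1"
  have GF: "gc_functor C C (G \<circ> F)" using comp_functor[OF C F G] .
  have FG: "gc_functor D D (F \<circ> G)" using comp_functor[OF D G F] .
  have \<eta>h: "\<eta> x \<in> gc_hom C x (G (F x))" if "x \<in> gc_carrier C" for x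
    using nat_hom[OF C C id_functor[OF C] GF N1 that] unfolding \<eta>_def by simp
  have \<eta>n: "gc_comp C (\<eta> (gc_tgt C a)) a = gc_comp C (G (F a)) (\<eta> (gc_src C a))"
    if "a \<in> gc_carrier C" for a
    using nat_eq[OF C C id_functor[OF C] GF N1 that] unfolding \<eta>_def by simp
  have \<epsilon>h: "\<epsilon> y \<in> gc_hom D (F (G y)) y" if "y \<in> gc_carrier D" for y
    using nat_hom[OF D D FG id_functor[OF D] N2 that] unfolding \<epsilon>_def by simp
  have \<epsilon>n: "gc_comp D (\<epsilon> (gc_tgt D a)) (F (G a)) = gc_comp D a (\<epsilon> (gc_src D a))"
    if "a \<in> gc_carrier D" for a
    using nat_eq[OF D D FG id_functor[OF D] N2 that] unfolding \<epsilon>_def by simp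
  have t1: "gc_comp C (G (\<epsilon> y)) (\<eta> (G y)) = gc_ident C (G y)" if "y \<in> gc_carrier D" for y
    using T1 that unfolding \<eta>_def \<epsilon>_def by blast
  have t2: "gc_comp D (\<epsilon> (F x)) (F (\<eta> x)) = gc_ident D (F x)" if "x \<in> gc_carrier C" for x
    using T2 that unfolding \<eta>_def \<epsilon>_def by blast
  define \<phi> :: "'a \<Rightarrow> 'b \<Rightarrow> 'b \<Rightarrow> 'a" where "\<phi> = (\<lambda>f g u. gc_comp C (G u) (\<eta> f))"
  define \<psi> :: "'a \<Rightarrow> 'b \<Rightarrow> 'a \<Rightarrow> 'b" where "\<psi> = (\<lambda>f g w. gc_comp D (\<epsilon> g) (F w))"
  have \<phi>h: "\<phi> f g u \<in> gc_hom C f (G g)" if "f \<in> gc_carrier C" "u \<in> gc_hom D (F f) g" for f g u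
    unfolding \<phi>_def using gc_hom_comp(1)[OF C fun_hom[OF D G that(2)] \<eta>h[OF that(1)]] .
  have bij: "bij_betw (\<phi> f g) (gc_hom D (F f) g) (gc_hom C f (G g))"
    if f: "f \<in> gc_carrier C" and g: "g \<in> gc_carrier D" for f g
  proof (rule bij_betw_byWitness[where f'="\<psi> f g"])
    show "\<phi> f g ` gc_hom D (F f) g \<subseteq> gc_hom C f (G g)" using \<phi>h f by blast
    have \<psi>h: "\<psi> f g w \<in> gc_hom D (F f) g" if "w \<in> gc_hom C f (G g)" for w
      unfolding \<psi>_def using gc_hom_comp(1)[OF D \<epsilon>h[OF g] fun_hom[OF C F that]] .
    then show "\<psi> f g ` gc_hom C f (G g) \<subseteq> gc_hom D (F f) g" by blast
    show "\<forall>u\<in>gc_hom D (F f) g. \<psi> f g (\<phi> f g u) = u"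
    proof
      fix u assume u: "u \<in> gc_hom D (F f) g"
      have Gu: "G u \<in> gc_hom C (G (F f)) (G g)" using fun_hom[OF D G u] .
      have FGu: "F (G u) \<in> gc_hom D (F (G (F f))) (F (G g))" using fun_hom[OF C F Gu] .
      have F\<eta>: "F (\<eta> f) \<in> gc_hom D (F f) (F (G (F f)))" using fun_hom[OF C F \<eta>h[OF f]] .
      have Ff: "F f \<in> gc_carrier D" using fun_in[OF F f] .
      have \<epsilon>Ff: "\<epsilon> (F f) \<in> gc_hom D (F (G (F f))) (F f)" using \<epsilon>h[OF Ff] .
      have "\<psi> f g (\<phi> f g u) = gc_comp D (\<epsilon> g) (gc_comp D (F (G u)) (F (\<eta> f)))"
        unfolding \<psi>_def \<phi>_def using fun_comp_hom[OF C F Gu \<eta>h[OF f]] by simp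
      also have "\<dots> = gc_comp D (gc_comp D (\<epsilon> g) (F (G u))) (F (\<eta> f))"
        using gc_assoc_hom[OF D \<epsilon>h[OF g] FGu F\<eta>] by simp
      also have "gc_comp D (\<epsilon> g) (F (G u)) = gc_comp D u (\<epsilon> (F f))"
        using \<epsilon>n[OF gc_hom_carrier[OF u]] gc_hom_src[OF u] gc_hom_tgt[OF u] by simp
      also have "gc_comp D (gc_comp D u (\<epsilon> (F f))) (F (\<eta> f)) = gc_comp D u (gc_comp D (\<epsilon> (F f)) (F (\<eta> f)))"
        using gc_assoc_hom[OF D u \<epsilon>Ff F\<eta>] .
      also have "\<dots> = u" using t2[OF f] gc_hom_right[OF D u] by simp
      finally show "\<psi> f g (\<phi> f g u) = u" .
    qed
    show "\<forall>w\<in>gc_hom C f (G g). \<phi> f g (\<psi> f g w) = w"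
    proof
      fix w assume w: "w \<in> gc_hom C f (G g)"
      have Fw: "F w \<in> gc_hom D (F f) (F (G g))" using fun_hom[OF C F w] .
      have GFw: "G (F w) \<in> gc_hom C (G (F f)) (G (F (G g)))" using fun_hom[OF D G Fw] .
      have G\<epsilon>: "G (\<epsilon> g) \<in> gc_hom C (G (F (G g))) (G g)" using fun_hom[OF D G \<epsilon>h[OF g]] .
      have Gg: "G g \<in> gc_carrier C" using fun_in[OF G g] .
      have "\<phi> f g (\<psi> f g w) = gc_comp C (gc_comp C (G (\<epsilon> g)) (G (F w))) (\<eta> f)"
        unfolding \<psi>_def \<phi>_def using fun_comp_hom[OF D G \<epsilon>h[OF g] Fw] by simp
      also have "\<dots> = gc_comp C (G (\<epsilon> g)) (gc_comp C (G (F w)) (\<eta> f))"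
        using gc_assoc_hom[OF C G\<epsilon> GFw \<eta>h[OF f]] .
      also have "gc_comp C (G (F w)) (\<eta> f) = gc_comp C (\<eta> (G g)) w"
        using \<eta>n[OF gc_hom_carrier[OF w]] gc_hom_src[OF w] gc_hom_tgt[OF w] by simp
      also have "gc_comp C (G (\<epsilon> g)) (gc_comp C (\<eta> (G g)) w) = gc_comp C (gc_comp C (G (\<epsilon> g)) (\<eta> (G g))) w"
        using gc_assoc_hom[OF C G\<epsilon> \<eta>h[OF Gg] w] by simp
      also have "\<dots> = w" using t1[OF g] gc_hom_left[OF C w] by simp
      finally show "\<phi> f g (\<psi> f g w) = w" .
    qed
  qed
  have nat1: "\<phi> f g (gc_comp D u (F v)) = gc_comp C (\<phi> f' g u) v"
    if f: "f \<in> gc_carrier C" and f': "f' \<in> gc_carrier C" and v: "v \<in> gc_hom C f f'"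
      and u: "u \<in> gc_hom D (F f') g" for f f' g u v
  proof -
    have Fv: "F v \<in> gc_hom D (F f) (F f')" using fun_hom[OF C F v] .
    have Gu: "G u \<in> gc_hom C (G (F f')) (G g)" using fun_hom[OF D G u] .
    have GFv: "G (F v) \<in> gc_hom C (G (F f)) (G (F f'))" using fun_hom[OF D G Fv] .
    have "\<phi> f g (gc_comp D u (F v)) = gc_comp C (gc_comp C (G u) (G (F v))) (\<eta> f)"
      unfolding \<phi>_def using fun_comp_hom[OF D G u Fv] by simp
    also have "\<dots> = gc_comp C (G u) (gc_comp C (G (F v)) (\<eta> f))"
      using gc_assoc_hom[OF C Gu GFv \<eta>h[OF f]] .
    also have "gc_comp C (G (F v)) (\<eta> f) = gc_comp C (\<eta> f') v"
      using \<eta>n[OF gc_hom_carrier[OF v]] gc_hom_src[OF v] gc_hom_tgt[OF v] by simp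
    also have "gc_comp C (G u) (gc_comp C (\<eta> f') v) = gc_comp C (\<phi> f' g u) v"
      unfolding \<phi>_def using gc_assoc_hom[OF C Gu \<eta>h[OF f'] v] by simp
    finally show ?thesis .
  qed
  have nat2: "\<phi> f g' (gc_comp D v' v) = gc_comp C (G v') (\<phi> f g v)"
    if f: "f \<in> gc_carrier C" and v: "v \<in> gc_hom D (F f) g" and v': "v' \<in> gc_hom D g g'" for f g g' v v'
  proof -
    have Gv: "G v \<in> gc_hom C (G (F f)) (G g)" using fun_hom[OF D G v] .
    have Gv': "G v' \<in> gc_hom C (G g) (G g')" using fun_hom[OF D G v'] .
    show ?thesis unfolding \<phi>_def using fun_comp_hom[OF D G v' v] gc_assoc_hom[OF C Gv' Gv \<eta>h[OF f]] by simp
  qed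
  show ?thesis
    apply (rule exI[where x=\<phi>])
    using bij nat1 nat2 by blast
qed


lemma dir2:
  fixes C :: "'a gcat" and D :: "'b gcat" and F :: "'a \<Rightarrow> 'b" and G :: "'b \<Rightarrow> 'a"
    and \<phi> :: "'a \<Rightarrow> 'b \<Rightarrow> 'b \<Rightarrow> 'a"
  assumes C: "gen_cat C" and D: "gen_cat D"
    and F: "gc_functor C D F" and G: "gc_functor D C G"
    and B: "\<forall>f\<in>gc_carrier C. \<forall>g\<in>gc_carrier D.
               bij_betw (\<phi> f g) (gc_hom D (F f) g) (gc_hom C f (G g))"
    and N1: "\<forall>f\<in>gc_carrier C. \<forall>f'\<in>gc_carrier C. \<forall>g\<in>gc_carrier D.
               \<forall>v\<in>gc_hom C f f'. \<forall>u\<in>gc_hom D (F f') g.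
                 gc_defd D u (F v) \<longrightarrow>
                 \<phi> f g (gc_comp D u (F v)) = gc_comp C (\<phi> f' g u) v"
    and N2: "\<forall>f\<in>gc_carrier C. \<forall>g\<in>gc_carrier D. \<forall>g'\<in>gc_carrier D.
               \<forall>v\<in>gc_hom D (F f) g. \<forall>v'\<in>gc_hom D g g'.
                 gc_defd D v' v \<longrightarrow>
                 \<phi> f g' (gc_comp D v' v) = gc_comp C (G v') (\<phi> f g v)"
  shows "\<exists>\<eta>1 \<eta>2 \<epsilon>1 \<epsilon>2.
            gc_nat_trans C C id (G \<circ> F) \<eta>1 \<eta>2 \<and>
            gc_nat_trans D D (F \<circ> G) id \<epsilon>1 \<epsilon>2 \<and>
            (\<forall>y\<in>gc_carrier D.
               gc_defd C (G (gc_nt_val D \<epsilon>1 y)) (gc_nt_val C \<eta>1 (G y)) \<and>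
               gc_comp C (G (gc_nt_val D \<epsilon>1 y)) (gc_nt_val C \<eta>1 (G y)) = gc_ident C (G y)) \<and>
            (\<forall>x\<in>gc_carrier C.
               gc_defd D (gc_nt_val D \<epsilon>1 (F x)) (F (gc_nt_val C \<eta>1 x)) \<and>
               gc_comp D (gc_nt_val D \<epsilon>1 (F x)) (F (gc_nt_val C \<eta>1 x)) = gc_ident D (F x))"
proof -
  have n1: "\<phi> f g (gc_comp D u (F v)) = gc_comp C (\<phi> f' g u) v"
    if "f \<in> gc_carrier C" "f' \<in> gc_carrier C" "g \<in> gc_carrier D" "v \<in> gc_hom C f f'"
       "u \<in> gc_hom D (F f') g" for f f' g u v
    using N1 that gc_hom_comp(2)[OF D that(5) fun_hom[OF C F that(4)]] by blast
  have n2: "\<phi> f g' (gc_comp D v' v) = gc_comp C (G v') (\<phi> f g v)"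
    if "f \<in> gc_carrier C" "g \<in> gc_carrier D" "g' \<in> gc_carrier D" "v \<in> gc_hom D (F f) g"
       "v' \<in> gc_hom D g g'" for f g g' v v'
    using N2 that gc_hom_comp(2)[OF D that(5) that(4)] by blast
  have \<phi>h: "\<phi> f g u \<in> gc_hom C f (G g)"
    if "f \<in> gc_carrier C" "g \<in> gc_carrier D" "u \<in> gc_hom D (F f) g" for f g u
    using bij_betw_apply[OF B[rule_format, OF that(1,2)] that(3)] .
  have \<phi>inj: "u = u'"
    if "f \<in> gc_carrier C" "g \<in> gc_carrier D" "u \<in> gc_hom D (F f) g" "u' \<in> gc_hom D (F f) g"
       "\<phi> f g u = \<phi> f g u'" for f g u u'
    using inj_onD[OF bij_betw_imp_inj_on[OF B[rule_format, OF that(1,2)]] that(5,3,4)] .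
  define \<eta> where "\<eta> = (\<lambda>x. \<phi> x (F x) (gc_ident D (F x)))"
  define \<epsilon> where "\<epsilon> = (\<lambda>y. inv_into (gc_hom D (F (G y)) y) (\<phi> (G y) y) (gc_ident C (G y)))"
  have \<eta>h: "\<eta> x \<in> gc_hom C x (G (F x))" if x: "x \<in> gc_carrier C" for x
    unfolding \<eta>_def using \<phi>h[OF x fun_in[OF F x] gc_ident_props(4)[OF D fun_in[OF F x]]] .
  have \<epsilon>p: "\<epsilon> y \<in> gc_hom D (F (G y)) y \<and> \<phi> (G y) y (\<epsilon> y) = gc_ident C (G y)"
    if y: "y \<in> gc_carrier D" for y
  proof -
    have Gy: "G y \<in> gc_carrier C" using fun_in[OF G y] .
    have bj: "bij_betw (\<phi> (G y) y) (gc_hom D (F (G y)) y) (gc_hom C (G y) (G y))" using B Gy y by blast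
    have i: "gc_ident C (G y) \<in> gc_hom C (G y) (G y)" using gc_ident_props(4)[OF C Gy] .
    have im: "gc_ident C (G y) \<in> \<phi> (G y) y ` gc_hom D (F (G y)) y" using bj i unfolding bij_betw_def by simp
    show ?thesis unfolding \<epsilon>_def using inv_into_into[OF im] f_inv_into_f[OF im] by simp
  qed
  have \<epsilon>h: "\<epsilon> y \<in> gc_hom D (F (G y)) y" if "y \<in> gc_carrier D" for y using \<epsilon>p that by blast
  have \<epsilon>i: "\<phi> (G y) y (\<epsilon> y) = gc_ident C (G y)" if "y \<in> gc_carrier D" for y using \<epsilon>p that by blast
  have \<eta>n: "gc_comp C (\<eta> (gc_tgt C a)) a = gc_comp C (G (F a)) (\<eta> (gc_src C a))"
    if a: "a \<in> gc_carrier C" for a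
  proof -
    let ?s = "gc_src C a" and ?t = "gc_tgt C a"
    have s: "?s \<in> gc_carrier C" and t: "?t \<in> gc_carrier C" using gcA[OF C] a by auto
    have ah: "a \<in> gc_hom C ?s ?t" using gc_in_hom[OF a] .
    have Fa: "F a \<in> gc_hom D (F ?s) (F ?t)" using fun_hom[OF C F ah] .
    have Fs: "F ?s \<in> gc_carrier D" and Ft: "F ?t \<in> gc_carrier D" using fun_in[OF F] s t by auto
    have "gc_comp C (\<eta> ?t) a = \<phi> ?s (F ?t) (gc_comp D (gc_ident D (F ?t)) (F a))"
      unfolding \<eta>_def using n1[OF s t Ft ah gc_ident_props(4)[OF D Ft]] by simp
    also have "\<dots> = \<phi> ?s (F ?t) (F a)" using gc_hom_left[OF D Fa] by simp
    also have "\<dots> = \<phi> ?s (F ?t) (gc_comp D (F a) (gc_ident D (F ?s)))" using gc_hom_right[OF D Fa] by simp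
    also have "\<dots> = gc_comp C (G (F a)) (\<eta> ?s)"
      unfolding \<eta>_def using n2[OF s Fs Ft gc_ident_props(4)[OF D Fs] Fa] by simp
    finally show ?thesis .
  qed
  have \<epsilon>n: "gc_comp D (\<epsilon> (gc_tgt D a)) (F (G a)) = gc_comp D a (\<epsilon> (gc_src D a))"
    if a: "a \<in> gc_carrier D" for a
  proof -
    let ?s = "gc_src D a" and ?t = "gc_tgt D a"
    have s: "?s \<in> gc_carrier D" and t: "?t \<in> gc_carrier D" using gcA[OF D] a by auto
    have ah: "a \<in> gc_hom D ?s ?t" using gc_in_hom[OF a] .
    have Ga: "G a \<in> gc_hom C (G ?s) (G ?t)" using fun_hom[OF D G ah] .
    have FGa: "F (G a) \<in> gc_hom D (F (G ?s)) (F (G ?t))" using fun_hom[OF C F Ga] .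
    have Gs: "G ?s \<in> gc_carrier C" and Gt: "G ?t \<in> gc_carrier C" using fun_in[OF G] s t by auto
    have L: "gc_comp D (\<epsilon> ?t) (F (G a)) \<in> gc_hom D (F (G ?s)) ?t"
      using gc_hom_comp(1)[OF D \<epsilon>h[OF t] FGa] .
    have R: "gc_comp D a (\<epsilon> ?s) \<in> gc_hom D (F (G ?s)) ?t"
      using gc_hom_comp(1)[OF D ah \<epsilon>h[OF s]] .
    have "\<phi> (G ?s) ?t (gc_comp D (\<epsilon> ?t) (F (G a))) = gc_comp C (gc_ident C (G ?t)) (G a)"
      using n1[OF Gs Gt t Ga \<epsilon>h[OF t]] \<epsilon>i[OF t] by simp
    also have "\<dots> = G a" using gc_hom_left[OF C Ga] .
    also have "\<dots> = gc_comp C (G a) (gc_ident C (G ?s))" using gc_hom_right[OF C Ga] by simp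
    also have "\<dots> = \<phi> (G ?s) ?t (gc_comp D a (\<epsilon> ?s))"
      using n2[OF Gs s t \<epsilon>h[OF s] ah] \<epsilon>i[OF s] by simp
    finally show ?thesis using \<phi>inj[OF Gs t L R] by simp
  qed
  define \<eta>1 where "\<eta>1 = (\<lambda>a. \<eta> (gc_tgt C a))"
  define \<eta>2 where "\<eta>2 = (\<lambda>a. \<eta> (gc_src C a))"
  define \<epsilon>1 where "\<epsilon>1 = (\<lambda>a. \<epsilon> (gc_tgt D a))"
  define \<epsilon>2 where "\<epsilon>2 = (\<lambda>a. \<epsilon> (gc_src D a))"
  have v\<eta>: "gc_nt_val C \<eta>1 x = \<eta> x" if "x \<in> gc_carrier C" for x
    unfolding gc_nt_val_def \<eta>1_def using gc_ident_props[OF C that] by simp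
  have v\<epsilon>: "gc_nt_val D \<epsilon>1 y = \<epsilon> y" if "y \<in> gc_carrier D" for y
    unfolding gc_nt_val_def \<epsilon>1_def using gc_ident_props[OF D that] by simp
  have NT1: "gc_nat_trans C C id (G \<circ> F) \<eta>1 \<eta>2"
    unfolding gc_nat_trans_def
  proof (intro conjI ballI impI)
    fix a assume a: "a \<in> gc_carrier C"
    have s: "gc_src C a \<in> gc_carrier C" and t: "gc_tgt C a \<in> gc_carrier C" using gcA[OF C] a by auto
    have ah: "a \<in> gc_hom C (gc_src C a) (gc_tgt C a)" using gc_in_hom[OF a] .
    have GFa: "G (F a) \<in> gc_hom C (G (F (gc_src C a))) (G (F (gc_tgt C a)))"
      using fun_hom[OF D G fun_hom[OF C F ah]] .
    show "\<eta>1 a \<in> gc_carrier C" unfolding \<eta>1_def using gc_hom_carrier[OF \<eta>h[OF t]] .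
    show "\<eta>2 a \<in> gc_carrier C" unfolding \<eta>2_def using gc_hom_carrier[OF \<eta>h[OF s]] .
    show "gc_defd C (\<eta>1 a) (id a)" unfolding \<eta>1_def using gc_hom_comp(2)[OF C \<eta>h[OF t] ah] by simp
    show "gc_defd C ((G \<circ> F) a) (\<eta>2 a)" unfolding \<eta>2_def using gc_hom_comp(2)[OF C GFa \<eta>h[OF s]] by simp
    show "gc_comp C (\<eta>1 a) (id a) = gc_comp C ((G \<circ> F) a) (\<eta>2 a)"
      unfolding \<eta>1_def \<eta>2_def using \<eta>n[OF a] by simp
  next
    fix a b assume "gc_tgt C a = gc_tgt C b" then show "\<eta>1 a = \<eta>1 b" unfolding \<eta>1_def by simp
  next
    fix a b assume "gc_src C a = gc_src C b" then show "\<eta>2 a = \<eta>2 b" unfolding \<eta>2_def by simp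
  qed
  have NT2: "gc_nat_trans D D (F \<circ> G) id \<epsilon>1 \<epsilon>2"
    unfolding gc_nat_trans_def
  proof (intro conjI ballI impI)
    fix a assume a: "a \<in> gc_carrier D"
    have s: "gc_src D a \<in> gc_carrier D" and t: "gc_tgt D a \<in> gc_carrier D" using gcA[OF D] a by auto
    have ah: "a \<in> gc_hom D (gc_src D a) (gc_tgt D a)" using gc_in_hom[OF a] .
    have FGa: "F (G a) \<in> gc_hom D (F (G (gc_src D a))) (F (G (gc_tgt D a)))"
      using fun_hom[OF C F fun_hom[OF D G ah]] .
    show "\<epsilon>1 a \<in> gc_carrier D" unfolding \<epsilon>1_def using gc_hom_carrier[OF \<epsilon>h[OF t]] .
    show "\<epsilon>2 a \<in> gc_carrier D" unfolding \<epsilon>2_def using gc_hom_carrier[OF \<epsilon>h[OF s]] .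
    show "gc_defd D (\<epsilon>1 a) ((F \<circ> G) a)" unfolding \<epsilon>1_def using gc_hom_comp(2)[OF D \<epsilon>h[OF t] FGa] by simp
    show "gc_defd D (id a) (\<epsilon>2 a)" unfolding \<epsilon>2_def using gc_hom_comp(2)[OF D ah \<epsilon>h[OF s]] by simp
    show "gc_comp D (\<epsilon>1 a) ((F \<circ> G) a) = gc_comp D (id a) (\<epsilon>2 a)"
      unfolding \<epsilon>1_def \<epsilon>2_def using \<epsilon>n[OF a] by simp
  next
    fix a b assume "gc_tgt D a = gc_tgt D b" then show "\<epsilon>1 a = \<epsilon>1 b" unfolding \<epsilon>1_def by simp
  next
    fix a b assume "gc_src D a = gc_src D b" then show "\<epsilon>2 a = \<epsilon>2 b" unfolding \<epsilon>2_def by simp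
  qed
  have TR1: "gc_defd C (G (\<epsilon> y)) (\<eta> (G y)) \<and> gc_comp C (G (\<epsilon> y)) (\<eta> (G y)) = gc_ident C (G y)"
    if y: "y \<in> gc_carrier D" for y
  proof
    have Gy: "G y \<in> gc_carrier C" using fun_in[OF G y] .
    have FGy: "F (G y) \<in> gc_carrier D" using fun_in[OF F Gy] .
    have G\<epsilon>: "G (\<epsilon> y) \<in> gc_hom C (G (F (G y))) (G y)" using fun_hom[OF D G \<epsilon>h[OF y]] .
    show "gc_defd C (G (\<epsilon> y)) (\<eta> (G y))" using gc_hom_comp(2)[OF C G\<epsilon> \<eta>h[OF Gy]] .
    have "gc_comp C (G (\<epsilon> y)) (\<eta> (G y)) = \<phi> (G y) y (gc_comp D (\<epsilon> y) (gc_ident D (F (G y))))"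
      unfolding \<eta>_def using n2[OF Gy FGy y gc_ident_props(4)[OF D FGy] \<epsilon>h[OF y]] by simp
    also have "\<dots> = \<phi> (G y) y (\<epsilon> y)" using gc_hom_right[OF D \<epsilon>h[OF y]] by simp
    finally show "gc_comp C (G (\<epsilon> y)) (\<eta> (G y)) = gc_ident C (G y)" using \<epsilon>i[OF y] by simp
  qed
  have TR2: "gc_defd D (\<epsilon> (F x)) (F (\<eta> x)) \<and> gc_comp D (\<epsilon> (F x)) (F (\<eta> x)) = gc_ident D (F x)"
    if x: "x \<in> gc_carrier C" for x
  proof
    have Fx: "F x \<in> gc_carrier D" using fun_in[OF F x] .
    have GFx: "G (F x) \<in> gc_carrier C" using fun_in[OF G Fx] .
    have F\<eta>: "F (\<eta> x) \<in> gc_hom D (F x) (F (G (F x)))" using fun_hom[OF C F \<eta>h[OF x]] .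
    show "gc_defd D (\<epsilon> (F x)) (F (\<eta> x))" using gc_hom_comp(2)[OF D \<epsilon>h[OF Fx] F\<eta>] .
    have L: "gc_comp D (\<epsilon> (F x)) (F (\<eta> x)) \<in> gc_hom D (F x) (F x)"
      using gc_hom_comp(1)[OF D \<epsilon>h[OF Fx] F\<eta>] .
    have R: "gc_ident D (F x) \<in> gc_hom D (F x) (F x)" using gc_ident_props(4)[OF D Fx] .
    have "\<phi> x (F x) (gc_comp D (\<epsilon> (F x)) (F (\<eta> x))) = gc_comp C (gc_ident C (G (F x))) (\<eta> x)"
      using n1[OF x GFx Fx \<eta>h[OF x] \<epsilon>h[OF Fx]] \<epsilon>i[OF Fx] by simp
    also have "\<dots> = \<eta> x" using gc_hom_left[OF C \<eta>h[OF x]] .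
    also have "\<dots> = \<phi> x (F x) (gc_ident D (F x))" unfolding \<eta>_def ..
    finally show "gc_comp D (\<epsilon> (F x)) (F (\<eta> x)) = gc_ident D (F x)" using \<phi>inj[OF x Fx L R] by simp
  qed
  show ?thesis
  proof (intro exI conjI ballI)
    show "gc_nat_trans C C id (G \<circ> F) \<eta>1 \<eta>2" by (rule NT1)
    show "gc_nat_trans D D (F \<circ> G) id \<epsilon>1 \<epsilon>2" by (rule NT2)
  next
    fix y assume y: "y \<in> gc_carrier D"
    have Gy: "G y \<in> gc_carrier C" using fun_in[OF G y] .
    show "gc_defd C (G (gc_nt_val D \<epsilon>1 y)) (gc_nt_val C \<eta>1 (G y))"
      "gc_comp C (G (gc_nt_val D \<epsilon>1 y)) (gc_nt_val C \<eta>1 (G y)) = gc_ident C (G y)"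
      using TR1[OF y] v\<eta>[OF Gy] v\<epsilon>[OF y] by simp_all
  next
    fix x assume x: "x \<in> gc_carrier C"
    have Fx: "F x \<in> gc_carrier D" using fun_in[OF F x] .
    show "gc_defd D (gc_nt_val D \<epsilon>1 (F x)) (F (gc_nt_val C \<eta>1 x))"
      "gc_comp D (gc_nt_val D \<epsilon>1 (F x)) (F (gc_nt_val C \<eta>1 x)) = gc_ident D (F x)"
      using TR2[OF x] v\<eta>[OF x] v\<epsilon>[OF Fx] by simp_all
  qed
qed


theorem mainTheorem2:
  fixes C :: "'a gcat" and D :: "'b gcat" and F :: "'a \<Rightarrow> 'b" and G :: "'b \<Rightarrow> 'a"
  assumes "gen_cat C" and "gen_cat D"
    and "gc_functor C D F" and "gc_functor D C G"
  shows "(\<exists>\<eta>1 \<eta>2 \<epsilon>1 \<epsilon>2.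
            gc_nat_trans C C id (G \<circ> F) \<eta>1 \<eta>2 \<and>
            gc_nat_trans D D (F \<circ> G) id \<epsilon>1 \<epsilon>2 \<and>
            (\<forall>y\<in>gc_carrier D.
               gc_defd C (G (gc_nt_val D \<epsilon>1 y)) (gc_nt_val C \<eta>1 (G y)) \<and>
               gc_comp C (G (gc_nt_val D \<epsilon>1 y)) (gc_nt_val C \<eta>1 (G y)) = gc_ident C (G y)) \<and>
            (\<forall>x\<in>gc_carrier C.
               gc_defd D (gc_nt_val D \<epsilon>1 (F x)) (F (gc_nt_val C \<eta>1 x)) \<and>
               gc_comp D (gc_nt_val D \<epsilon>1 (F x)) (F (gc_nt_val C \<eta>1 x)) = gc_ident D (F x)))
     \<longleftrightarrow>
         (\<exists>\<phi> :: 'a \<Rightarrow> 'b \<Rightarrow> 'b \<Rightarrow> 'a.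
            (\<forall>f\<in>gc_carrier C. \<forall>g\<in>gc_carrier D.
               bij_betw (\<phi> f g) (gc_hom D (F f) g) (gc_hom C f (G g))) \<and>
            (\<forall>f\<in>gc_carrier C. \<forall>f'\<in>gc_carrier C. \<forall>g\<in>gc_carrier D.
               \<forall>v\<in>gc_hom C f f'. \<forall>u\<in>gc_hom D (F f') g.
                 gc_defd D u (F v) \<longrightarrow>
                 \<phi> f g (gc_comp D u (F v)) = gc_comp C (\<phi> f' g u) v) \<and>
            (\<forall>f\<in>gc_carrier C. \<forall>g\<in>gc_carrier D. \<forall>g'\<in>gc_carrier D.
               \<forall>v\<in>gc_hom D (F f) g. \<forall>v'\<in>gc_hom D g g'.
                 gc_defd D v' v \<longrightarrow>
                 \<phi> f g' (gc_comp D v' v) = gc_comp C (G v') (\<phi> f g v)))"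
  apply (rule iffI)
   apply (erule exE)+
   apply (elim conjE)
   apply (rule dir1[OF assms])
      apply assumption+
  apply (erule exE)
  apply (elim conjE)
  apply (rule dir2[OF assms])
    apply assumption+
  done

end
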